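(* Let $G$ be a graph and $X\subseteq V(G)$ a vertex cover of $G$. For any set $\mathcal{B}$ of closed neighborhoods of $G$, NCTD$(\mathcal{B})\le 2^{|X|+1}+|X|$.
   Context: $N[v]$ is the closed neighborhood of $v$. A teaching map for a set $\mathcal{B}$ of closed neighborhoods assigns to each $B\in\mathcal{B}$ a set $T(B)\subseteq V(G)$. A vertex $w$ distinguishes $B,B'$ if $w$ lies in exactly one of $B,B'$. $T$ is non-clashing if for all distinct $B,B'\in\mathcal{B}$ some $w\in T(B)\cup T(B')$ distinguishes $B$ and $B'$; its size is $\max_{B\in\mathcal{B}}|T(B)|$. NCTD$(\mathcal{B})$ is the minimum size of a non-clashing teaching map for $\mathcal{B}$. *)

theory Defs
  imports Main
begin

definition graph :: "'a set \<Rightarrow> ('a \<Rightarrow> 'a \<Rightarrow> bool) \<Rightarrow> bool" where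
  "graph V E \<longleftrightarrow> finite V \<and> (\<forall>u v. E u v \<longrightarrow> u \<in> V \<and> v \<in> V)
     \<and> (\<forall>u v. E u v \<longrightarrow> E v u) \<and> (\<forall>v. \<not> E v v)"

definition vertex_cover :: "'a set \<Rightarrow> ('a \<Rightarrow> 'a \<Rightarrow> bool) \<Rightarrow> 'a set \<Rightarrow> bool" where
  "vertex_cover V E X \<longleftrightarrow> X \<subseteq> V \<and> (\<forall>u v. E u v \<longrightarrow> u \<in> X \<or> v \<in> X)"

definition closed_nbhd :: "'a set \<Rightarrow> ('a \<Rightarrow> 'a \<Rightarrow> bool) \<Rightarrow> 'a \<Rightarrow> 'a set" where
  "closed_nbhd V E v = insert v {u \<in> V. E v u}"

definition distinguishes :: "'a \<Rightarrow> 'a set \<Rightarrow> 'a set \<Rightarrow> bool" where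
  "distinguishes w B B' \<longleftrightarrow> (w \<in> B \<longleftrightarrow> w \<notin> B')"

definition non_clashing :: "'a set \<Rightarrow> 'a set set \<Rightarrow> ('a set \<Rightarrow> 'a set) \<Rightarrow> bool" where
  "non_clashing V \<B> T \<longleftrightarrow> (\<forall>B\<in>\<B>. T B \<subseteq> V) \<and>
     (\<forall>B\<in>\<B>. \<forall>B'\<in>\<B>. B \<noteq> B' \<longrightarrow> (\<exists>w\<in>T B \<union> T B'. distinguishes w B B'))"

definition teaching_size :: "'a set set \<Rightarrow> ('a set \<Rightarrow> 'a set) \<Rightarrow> nat" where
  "teaching_size \<B> T = Max (insert 0 ((\<lambda>B. card (T B)) ` \<B>))"

definition NCTD :: "'a set \<Rightarrow> 'a set set \<Rightarrow> nat" where
  "NCTD V \<B> = (LEAST k. \<exists>T. non_clashing V \<B> T \<and> teaching_size \<B> T = k)"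

end

theory Submission
  imports Defs
begin

lemma pow_bound: "Suc n \<le> 2 ^ Suc n"
  by (induction n) auto

theorem lemma3:
  fixes V :: "'a set" and E :: "'a \<Rightarrow> 'a \<Rightarrow> bool" and X :: "'a set" and \<B> :: "'a set set"
  assumes "graph V E"
    and "vertex_cover V E X"
    and "\<B> \<subseteq> closed_nbhd V E ` V"
  shows "NCTD V \<B> \<le> 2 ^ (card X + 1) + card X"
proof -
  let ?N = "closed_nbhd V E"
  have finV: "finite V" and XV: "X \<subseteq> V" using assms(1,2) unfolding graph_def vertex_cover_def by auto
  have finX: "finite X" using finV XV finite_subset by blast
  have NV: "?N v \<subseteq> V" if "v \<in> V" for v using that unfolding closed_nbhd_def by auto
  have Iball: "?N v - X = {v}" if "v \<in> V" "v \<notin> X" for v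
    using that assms(2) unfolding closed_nbhd_def vertex_cover_def by auto
  define c where "c B = (SOME v. v \<in> V \<and> B = ?N v)" for B
  define W where "W B = (\<lambda>B'. SOME w. w \<in> V \<and> distinguishes w B B') ` (?N ` X - {B})" for B
  define T where "T B = X \<union> {c B} \<union> W B" for B
  have cB: "c B \<in> V \<and> B = ?N (c B)" if "B \<in> \<B>" for B
  proof -
    from that assms(3) obtain v where "v \<in> V \<and> B = ?N v" by auto
    then show ?thesis unfolding c_def by (rule someI)
  qed
  have wex: "\<exists>w. w \<in> V \<and> distinguishes w B B'" if "B \<subseteq> V" "B' \<subseteq> V" "B \<noteq> B'" for B B'
    using that unfolding distinguishes_def by blast
  have Wprop: "(SOME w. w \<in> V \<and> distinguishes w B B') \<in> V \<and> distinguishes (SOME w. w \<in> V \<and> distinguishes w B B') B B'"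
    if "B \<subseteq> V" "B' \<subseteq> V" "B \<noteq> B'" for B B'
    using someI_ex[OF wex[OF that]] .
  have BV: "B \<subseteq> V" if "B \<in> \<B>" for B using cB[OF that] NV by metis
  have WV: "W B \<subseteq> V" if "B \<in> \<B>" for B
  proof
    fix w assume "w \<in> W B"
    then obtain x where x: "x \<in> X" "?N x \<noteq> B" "w = (SOME w. w \<in> V \<and> distinguishes w B (?N x))"
      unfolding W_def by auto
    show "w \<in> V" using Wprop[OF BV[OF that] NV[of x] x(2)[symmetric]] x XV by auto
  qed
  have nc: "non_clashing V \<B> T"
    unfolding non_clashing_def
  proof (intro conjI ballI impI)
    fix B assume "B \<in> \<B>" then show "T B \<subseteq> V" unfolding T_def using XV WV cB by auto
  next
    fix B B' assume B: "B \<in> \<B>" and B': "B' \<in> \<B>" and ne: "B \<noteq> B'"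
    show "\<exists>w\<in>T B \<union> T B'. distinguishes w B B'"
    proof (cases "B' \<in> ?N ` X")
      case True
      then obtain x where x: "x \<in> X" "B' = ?N x" by auto
      let ?w = "SOME w. w \<in> V \<and> distinguishes w B B'"
      have "?w \<in> W B" unfolding W_def using x ne by auto
      moreover have "distinguishes ?w B B'" using Wprop[OF BV[OF B] BV[OF B'] ne] by blast
      ultimately show ?thesis unfolding T_def by blast
    next
      case False
      note F' = False
      show ?thesis
      proof (cases "B \<in> ?N ` X")
        case True
        then obtain x where x: "x \<in> X" "B = ?N x" by auto
        let ?w = "SOME w. w \<in> V \<and> distinguishes w B' B"
        have "?w \<in> W B'" unfolding W_def using x ne by auto
        moreover have "distinguishes ?w B' B" using Wprop[OF BV[OF B'] BV[OF B] ne[symmetric]] by blast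
        ultimately show ?thesis unfolding T_def distinguishes_def by blast
      next
        case False
        have c1: "c B \<notin> X" using False cB[OF B] by force
        have c2: "c B' \<notin> X" using F' cB[OF B'] by force
        have e1: "B - X = {c B}" using Iball[of "c B"] c1 cB[OF B] by metis
        have e2: "B' - X = {c B'}" using Iball[of "c B'"] c2 cB[OF B'] by metis
        have "c B \<noteq> c B'" using cB[OF B] cB[OF B'] ne by metis
        then have "distinguishes (c B) B B'" using e1 e2 unfolding distinguishes_def by blast
        then show ?thesis unfolding T_def by blast
      qed
    qed
  qed
  have cardT: "card (T B) \<le> 2 ^ (card X + 1) + card X" for B
  proof -
    have "card (W B) \<le> card (?N ` X - {B})" unfolding W_def
      using finX by (intro card_image_le) auto
    also have "\<dots> \<le> card (?N ` X)" using finX by (intro card_mono) auto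
    also have "\<dots> \<le> card X" using finX by (rule card_image_le)
    finally have w: "card (W B) \<le> card X" .
    have "card (T B) \<le> card (X \<union> {c B}) + card (W B)" unfolding T_def by (rule card_Un_le)
    also have "\<dots> \<le> card X + 1 + card X" using card_Un_le[of X "{c B}"] w by simp
    also have "\<dots> \<le> 2 ^ (card X + 1) + card X" using pow_bound[of "card X"] by simp
    finally show ?thesis .
  qed
  have finB: "finite \<B>" using assms(3) finV finite_surj by blast
  have ts: "teaching_size \<B> T \<le> 2 ^ (card X + 1) + card X"
    unfolding teaching_size_def using finB cardT by (subst Max_le_iff) auto
  have "NCTD V \<B> \<le> teaching_size \<B> T"
    unfolding NCTD_def using nc by (intro Least_le) blast
  with ts show ?thesis by linarith
qed

end
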